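(* Let $X$ be a measure space, let $\Phi_1,\Phi_2,\Phi_3$ be Young functions and $u_1,u_2,u_3:X\to(0,\infty)$ weights such that $\Phi_1^{-1}(t)\Phi_2^{-1}(t)\le\Phi_3^{-1}(t)$ for every $t>0$ and $u_3(x)\le u_1(x)u_2(x)$ for every $x\in X$. If $f_1\in wL_{\Phi_1}^{u_1}(X)$ and $f_2\in wL_{\Phi_2}^{u_2}(X)$, then $f_1f_2\in wL_{\Phi_3}^{u_3}(X)$ and $$\|f_1f_2\|_{wL_{\Phi_3}^{u_3}(X)}\le 2\|f_1\|_{wL_{\Phi_1}^{u_1}(X)}\|f_2\|_{wL_{\Phi_2}^{u_2}(X)}.$$
   Context: A Young function is a function $\Phi:[0,\infty)\to[0,\infty)$ that is convex, left-continuous, satisfies $\lim_{t\to0}\Phi(t)=0=\Phi(0)$ and $\lim_{t\to\infty}\Phi(t)=\infty$. Its generalized inverse is $\Phi^{-1}(s):=\inf\{r\ge0:\Phi(r)>s\}$. For a Young function $\Phi$ and a weight $u:X\to(0,\infty)$, the weighted weak Orlicz space $wL_\Phi^u(X)$ is the set of measurable $f:X\to\mathbb{R}$ with $\|f\|_{wL_\Phi^u(X)} := \inf\{ b>0 : \sup_{t>0} \Phi(t)\,|\{x\in X : |u(x)f(x)|/b > t\}| \le 1\} < \infty$, where $|\cdot|$ denotes the measure on $X$. *)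

theory Defs
  imports "HOL-Analysis.Analysis"
begin

text \<open>Young function on [0,\<infinity>), represented as a real function; only its values on [0,\<infinity>) matter.\<close>
definition young_function :: "(real \<Rightarrow> real) \<Rightarrow> bool" where
  "young_function \<Phi> \<longleftrightarrow>
     (\<forall>t\<ge>0. \<Phi> t \<ge> 0) \<and>
     convex_on {0..} \<Phi> \<and>
     (\<forall>t>0. (\<Phi> \<longlongrightarrow> \<Phi> t) (at_left t)) \<and>
     \<Phi> 0 = 0 \<and> (\<Phi> \<longlongrightarrow> 0) (at_right 0) \<and>
     filterlim \<Phi> at_top at_top"

definition young_inv :: "(real \<Rightarrow> real) \<Rightarrow> real \<Rightarrow> real" where
  "young_inv \<Phi> s = Inf {r. r \<ge> 0 \<and> \<Phi> r > s}"

definition wOrlicz_admissible ::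
  "'a measure \<Rightarrow> (real \<Rightarrow> real) \<Rightarrow> ('a \<Rightarrow> real) \<Rightarrow> ('a \<Rightarrow> real) \<Rightarrow> real set" where
  "wOrlicz_admissible M \<Phi> u f =
     {b. b > 0 \<and> (\<forall>t>0. ennreal (\<Phi> t) *
          emeasure M {x \<in> space M. \<bar>u x * f x\<bar> / b > t} \<le> 1)}"

definition wOrlicz_norm ::
  "'a measure \<Rightarrow> (real \<Rightarrow> real) \<Rightarrow> ('a \<Rightarrow> real) \<Rightarrow> ('a \<Rightarrow> real) \<Rightarrow> real" where
  "wOrlicz_norm M \<Phi> u f = Inf (wOrlicz_admissible M \<Phi> u f)"

definition wOrlicz_space ::
  "'a measure \<Rightarrow> (real \<Rightarrow> real) \<Rightarrow> ('a \<Rightarrow> real) \<Rightarrow> ('a \<Rightarrow> real) set" where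
  "wOrlicz_space M \<Phi> u =
     {f. f \<in> borel_measurable M \<and> wOrlicz_admissible M \<Phi> u f \<noteq> {}}"

end

theory Submission imports Defs begin

lemma yf_mono:
  assumes "young_function \<Phi>" "0 \<le> r" "r \<le> s" shows "\<Phi> r \<le> \<Phi> s"
proof (cases "r = s")
  case False
  with assms have s: "s > 0" by auto
  from assms have c: "convex_on {0..} \<Phi>" and z: "\<Phi> 0 = 0" and nn: "\<Phi> s \<ge> 0"
    by (auto simp: young_function_def)
  have "\<Phi> ((1 - r/s) *\<^sub>R 0 + (r/s) *\<^sub>R s) \<le> (1 - r/s) * \<Phi> 0 + (r/s) * \<Phi> s"
    using c s assms by (intro convex_onD) (auto simp: field_simps)
  moreover have "(1 - r/s) *\<^sub>R 0 + (r/s) *\<^sub>R s = r" using s by simp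
  ultimately have "\<Phi> r \<le> (r/s) * \<Phi> s" using z by simp
  also have "\<dots> \<le> \<Phi> s" using nn assms s by (intro mult_left_le_one_le) auto
  finally show ?thesis .
qed simp

lemma yf_scale:
  assumes "young_function \<Phi>" "0 < s" "s \<le> r" shows "\<Phi> s \<le> (s/r) * \<Phi> r"
proof -
  from assms have c: "convex_on {0..} \<Phi>" and z: "\<Phi> 0 = 0"
    by (auto simp: young_function_def)
  have r: "r > 0" using assms by auto
  have "\<Phi> ((1 - s/r) *\<^sub>R 0 + (s/r) *\<^sub>R r) \<le> (1 - s/r) * \<Phi> 0 + (s/r) * \<Phi> r"
    using c r assms by (intro convex_onD) (auto simp: field_simps)
  moreover have "(1 - s/r) *\<^sub>R 0 + (s/r) *\<^sub>R r = s" using r by simp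
  ultimately show ?thesis using z by simp
qed

lemma yf_strict:
  assumes "young_function \<Phi>" "0 < s" "s < r" "\<Phi> s > 0" shows "\<Phi> s < \<Phi> r"
proof -
  have "\<Phi> s \<le> (s/r) * \<Phi> r" using yf_scale assms by auto
  hence "r * \<Phi> s \<le> s * \<Phi> r" using assms by (simp add: field_simps)
  moreover have "s * \<Phi> s < r * \<Phi> s" using assms by (intro mult_strict_right_mono) auto
  ultimately have "s * \<Phi> s < s * \<Phi> r" by linarith
  thus ?thesis using assms by simp
qed

lemma yf_double:
  assumes "young_function \<Phi>" "0 < t" shows "2 * \<Phi> t \<le> \<Phi> (2*t)"
  using yf_scale[OF assms(1) assms(2), of "2*t"] assms by (simp add: field_simps)

lemma yf_ex:
  assumes "young_function \<Phi>" shows "\<exists>r\<ge>0. \<Phi> r > w"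
proof -
  have "filterlim \<Phi> at_top at_top" using assms by (simp add: young_function_def)
  hence "eventually (\<lambda>r. \<Phi> r > w) at_top" by (simp add: filterlim_at_top_dense)
  then obtain N where "\<forall>r\<ge>N. \<Phi> r > w" by (auto simp: eventually_at_top_linorder)
  thus ?thesis by (intro exI[of _ "max N 0"]) auto
qed

lemma yinv_nonneg:
  assumes "young_function \<Phi>" shows "young_inv \<Phi> w \<ge> 0"
  unfolding young_inv_def using yf_ex[OF assms, of w]
  by (intro cInf_greatest) auto

lemma yinv_above:
  assumes "young_function \<Phi>" "e > 0" shows "\<Phi> (young_inv \<Phi> w + e) > w"
proof -
  let ?S = "{r. r \<ge> 0 \<and> \<Phi> r > w}"
  have ne: "?S \<noteq> {}" using yf_ex[OF assms(1), of w] by auto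
  have bdd: "bdd_below ?S" by (auto intro: bdd_belowI[of _ 0])
  have "Inf ?S < young_inv \<Phi> w + e" using assms(2) by (simp add: young_inv_def)
  then obtain r where r: "r \<in> ?S" "r < young_inv \<Phi> w + e"
    using cInf_lessD[OF ne] by blast
  have "\<Phi> r \<le> \<Phi> (young_inv \<Phi> w + e)" using r by (intro yf_mono[OF assms(1)]) auto
  thus ?thesis using r by auto
qed

lemma yinv_le:
  assumes "young_function \<Phi>" "t > 0" "\<Phi> t > 0" shows "young_inv \<Phi> (\<Phi> t) \<le> t"
proof (rule field_le_epsilon)
  fix e :: real assume e: "e > 0"
  have "t + e \<in> {r. r \<ge> 0 \<and> \<Phi> r > \<Phi> t}" using yf_strict[OF assms(1) assms(2), of "t+e"] assms e by auto
  thus "young_inv \<Phi> (\<Phi> t) \<le> t + e" unfolding young_inv_def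
    by (intro cInf_lower) (auto intro: bdd_belowI[of _ 0])
qed

lemma level_bound:
  assumes meas: "u \<in> borel_measurable M" "f \<in> borel_measurable M"
    and b: "b \<in> wOrlicz_admissible M \<Phi> u f"
    and r: "r \<ge> 0" and w: "w > 0" and above: "\<And>e. e > 0 \<Longrightarrow> \<Phi> (r + e) > w"
  shows "emeasure M {x \<in> space M. \<bar>u x * f x\<bar> / b > r} \<le> ennreal (1 / w)"
proof -
  define A where "A n = {x \<in> space M. \<bar>u x * f x\<bar> / b > r + 1 / Suc n}" for n :: nat
  have bpos: "b > 0" and adm: "\<And>t. t > 0 \<Longrightarrow> ennreal (\<Phi> t) *
          emeasure M {x \<in> space M. \<bar>u x * f x\<bar> / b > t} \<le> 1"
    using b by (auto simp: wOrlicz_admissible_def)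
  have sets: "range A \<subseteq> sets M" unfolding A_def using meas by auto
  have inc: "incseq A"
  proof (rule incseq_SucI)
    fix n
    have "1 / real (Suc (Suc n)) \<le> 1 / Suc n" by (simp add: frac_le)
    thus "A n \<subseteq> A (Suc n)" unfolding A_def by force
  qed
  have un: "(\<Union>n. A n) = {x \<in> space M. \<bar>u x * f x\<bar> / b > r}"
  proof safe
    fix x assume x: "x \<in> space M" "\<bar>u x * f x\<bar> / b > r"
    then obtain n where "1 / real (Suc n) < \<bar>u x * f x\<bar> / b - r"
      by (metis diff_gt_0_iff_gt nat_approx_posE)
    hence "r + 1 / real (Suc n) < \<bar>u x * f x\<bar> / b" by linarith
    thus "x \<in> (\<Union>n. A n)" using x unfolding A_def by blast
  next
    fix x n assume "x \<in> A n" thus "x \<in> space M" unfolding A_def by auto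
  next
    fix x n assume "x \<in> A n" thus "\<bar>u x * f x\<bar> / b > r" unfolding A_def
      by (auto intro: less_trans[rotated] simp: add_pos_pos)
  qed
  have each: "emeasure M (A n) \<le> ennreal (1 / w)" for n
  proof -
    have e: "1 / real (Suc n) > 0" by simp
    have p: "\<Phi> (r + 1 / Suc n) > w" using above[OF e] .
    have "ennreal w * emeasure M (A n) \<le> ennreal (\<Phi> (r + 1 / Suc n)) * emeasure M (A n)"
      using p by (intro mult_right_mono ennreal_leI) auto
    also have "\<dots> \<le> 1" unfolding A_def using r e by (intro adm) (simp add: add_nonneg_pos)
    finally have h: "ennreal w * emeasure M (A n) \<le> 1" .
    have "emeasure M (A n) = ennreal (1/w) * (ennreal w * emeasure M (A n))"
      using w by (simp add: mult.assoc[symmetric] ennreal_mult[symmetric])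
    also have "\<dots> \<le> ennreal (1/w) * 1" using h by (intro mult_left_mono) auto
    finally show ?thesis by simp
  qed
  have "emeasure M {x \<in> space M. \<bar>u x * f x\<bar> / b > r} = (SUP n. emeasure M (A n))"
    using SUP_emeasure_incseq[OF sets inc] un by simp
  also have "\<dots> \<le> ennreal (1 / w)" using each by (intro SUP_least) auto
  finally show ?thesis .
qed

lemma prod_admissible:
  assumes y1: "young_function \<Phi>1" and y2: "young_function \<Phi>2" and y3: "young_function \<Phi>3"
    and m: "u1 \<in> borel_measurable M" "u2 \<in> borel_measurable M" "u3 \<in> borel_measurable M"
       "f1 \<in> borel_measurable M" "f2 \<in> borel_measurable M"
    and pos: "\<forall>x\<in>space M. u1 x > 0" "\<forall>x\<in>space M. u2 x > 0" "\<forall>x\<in>space M. u3 x > 0"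
    and inv: "\<forall>t>0. young_inv \<Phi>1 t * young_inv \<Phi>2 t \<le> young_inv \<Phi>3 t"
    and uu: "\<forall>x\<in>space M. u3 x \<le> u1 x * u2 x"
    and b1: "b1 \<in> wOrlicz_admissible M \<Phi>1 u1 f1" and b2: "b2 \<in> wOrlicz_admissible M \<Phi>2 u2 f2"
  shows "2 * b1 * b2 \<in> wOrlicz_admissible M \<Phi>3 u3 (\<lambda>x. f1 x * f2 x)"
proof -
  have b1p: "b1 > 0" and b2p: "b2 > 0" using b1 b2 by (auto simp: wOrlicz_admissible_def)
  have "ennreal (\<Phi>3 t) * emeasure M {x \<in> space M. \<bar>u3 x * (f1 x * f2 x)\<bar> / (2 * b1 * b2) > t} \<le> 1"
    if t: "t > 0" for t
  proof (cases "\<Phi>3 t > 0")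
    case False
    hence "\<Phi>3 t = 0" using y3 t by (auto simp: young_function_def intro: antisym)
    thus ?thesis by simp
  next
    case True
    define w where "w = \<Phi>3 (2*t)"
    have w2: "2 * \<Phi>3 t \<le> w" unfolding w_def using yf_double[OF y3 t] .
    have wp: "w > 0" using w2 True by linarith
    define r1 where "r1 = young_inv \<Phi>1 w"
    define r2 where "r2 = young_inv \<Phi>2 w"
    have r1p: "r1 \<ge> 0" and r2p: "r2 \<ge> 0" unfolding r1_def r2_def
      using yinv_nonneg y1 y2 by auto
    have "r1 * r2 \<le> young_inv \<Phi>3 w" using inv wp unfolding r1_def r2_def by auto
    also have "\<dots> \<le> 2 * t" unfolding w_def using yinv_le[OF y3, of "2*t"] t wp w_def by auto
    finally have rr: "r1 * r2 \<le> 2 * t" .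
    define S1 where "S1 = {x \<in> space M. \<bar>u1 x * f1 x\<bar> / b1 > r1}"
    define S2 where "S2 = {x \<in> space M. \<bar>u2 x * f2 x\<bar> / b2 > r2}"
    define S3 where "S3 = {x \<in> space M. \<bar>u3 x * (f1 x * f2 x)\<bar> / (2 * b1 * b2) > t}"
    have mu1: "emeasure M S1 \<le> ennreal (1/w)" unfolding S1_def r1_def
      by (rule level_bound[OF m(1) m(4) b1 _ wp]) (use yinv_nonneg[OF y1] yinv_above[OF y1] in auto)
    have mu2: "emeasure M S2 \<le> ennreal (1/w)" unfolding S2_def r2_def
      by (rule level_bound[OF m(2) m(5) b2 _ wp]) (use yinv_nonneg[OF y2] yinv_above[OF y2] in auto)
    have sub: "S3 \<subseteq> S1 \<union> S2"
    proof
      fix x assume x: "x \<in> S3"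
      show "x \<in> S1 \<union> S2"
      proof (rule ccontr)
        assume "x \<notin> S1 \<union> S2"
        with x have xs: "x \<in> space M" and a1: "\<bar>u1 x * f1 x\<bar> / b1 \<le> r1" and a2: "\<bar>u2 x * f2 x\<bar> / b2 \<le> r2"
          unfolding S1_def S2_def S3_def by auto
        have c1: "\<bar>u1 x * f1 x\<bar> \<le> b1 * r1" using a1 b1p by (simp add: field_simps)
        have c2: "\<bar>u2 x * f2 x\<bar> \<le> b2 * r2" using a2 b2p by (simp add: field_simps)
        have "\<bar>u3 x * (f1 x * f2 x)\<bar> = u3 x * (\<bar>f1 x\<bar> * \<bar>f2 x\<bar>)" using pos xs by (simp add: abs_mult abs_of_pos)
        also have "\<dots> \<le> (u1 x * u2 x) * (\<bar>f1 x\<bar> * \<bar>f2 x\<bar>)" using uu xs by (intro mult_right_mono) auto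
        also have "\<dots> = \<bar>u1 x * f1 x\<bar> * \<bar>u2 x * f2 x\<bar>" using pos xs by (simp add: abs_mult abs_of_pos)
        also have "\<dots> \<le> (b1 * r1) * (b2 * r2)" using c1 c2 by (intro mult_mono) auto
        also have "\<dots> = b1 * b2 * (r1 * r2)" by simp
        also have "\<dots> \<le> b1 * b2 * (2 * t)" using rr b1p b2p by (intro mult_left_mono) auto
        finally have "\<bar>u3 x * (f1 x * f2 x)\<bar> / (2 * b1 * b2) \<le> t" using b1p b2p
          by (simp add: field_simps)
        thus False using x unfolding S3_def by auto
      qed
    qed
    have sets: "S1 \<in> sets M" "S2 \<in> sets M" unfolding S1_def S2_def using m by auto
    have "emeasure M S3 \<le> emeasure M (S1 \<union> S2)" using sub sets by (intro emeasure_mono) auto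
    also have "\<dots> \<le> emeasure M S1 + emeasure M S2" using sets by (rule emeasure_subadditive)
    also have "\<dots> \<le> ennreal (1/w) + ennreal (1/w)" using mu1 mu2 by (rule add_mono)
    also have "\<dots> = ennreal (2/w)" using wp by (simp add: ennreal_plus[symmetric])
    finally have m3: "emeasure M S3 \<le> ennreal (2/w)" .
    have "ennreal (\<Phi>3 t) * emeasure M S3 \<le> ennreal (\<Phi>3 t) * ennreal (2/w)"
      using m3 by (rule mult_left_mono) auto
    also have "\<dots> = ennreal (\<Phi>3 t * (2/w))" using True wp by (subst ennreal_mult) auto
    also have "\<dots> \<le> 1" using w2 wp by (simp add: field_simps)
    finally show ?thesis unfolding S3_def .
  qed
  thus ?thesis using b1p b2p unfolding wOrlicz_admissible_def by auto
qed

theorem theorem3p1: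
  fixes M :: "'a measure"
    and \<Phi>1 \<Phi>2 \<Phi>3 :: "real \<Rightarrow> real"
    and u1 u2 u3 f1 f2 :: "'a \<Rightarrow> real"
  assumes "young_function \<Phi>1" and "young_function \<Phi>2" and "young_function \<Phi>3"
    and "u1 \<in> borel_measurable M" and "u2 \<in> borel_measurable M" and "u3 \<in> borel_measurable M"
    and "\<forall>x\<in>space M. u1 x > 0" and "\<forall>x\<in>space M. u2 x > 0" and "\<forall>x\<in>space M. u3 x > 0"
    and "\<forall>t>0. young_inv \<Phi>1 t * young_inv \<Phi>2 t \<le> young_inv \<Phi>3 t"
    and "\<forall>x\<in>space M. u3 x \<le> u1 x * u2 x"
    and "f1 \<in> wOrlicz_space M \<Phi>1 u1" and "f2 \<in> wOrlicz_space M \<Phi>2 u2"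
  shows "(\<lambda>x. f1 x * f2 x) \<in> wOrlicz_space M \<Phi>3 u3 \<and>
         wOrlicz_norm M \<Phi>3 u3 (\<lambda>x. f1 x * f2 x)
           \<le> 2 * wOrlicz_norm M \<Phi>1 u1 f1 * wOrlicz_norm M \<Phi>2 u2 f2"
proof -
  let ?A1 = "wOrlicz_admissible M \<Phi>1 u1 f1"
  let ?A2 = "wOrlicz_admissible M \<Phi>2 u2 f2"
  let ?A3 = "wOrlicz_admissible M \<Phi>3 u3 (\<lambda>x. f1 x * f2 x)"
  have mf1: "f1 \<in> borel_measurable M" and ne1: "?A1 \<noteq> {}"
    using assms(12) by (auto simp: wOrlicz_space_def)
  have mf2: "f2 \<in> borel_measurable M" and ne2: "?A2 \<noteq> {}"
    using assms(13) by (auto simp: wOrlicz_space_def)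
  have key: "2 * b1 * b2 \<in> ?A3" if "b1 \<in> ?A1" "b2 \<in> ?A2" for b1 b2
    by (rule prod_admissible[OF assms(1-6) mf1 mf2 assms(7-11) that])
  have pos: "b > 0" if "b \<in> wOrlicz_admissible M \<Phi> u f" for b \<Phi> u f
    using that by (auto simp: wOrlicz_admissible_def)
  have bdd: "bdd_below (wOrlicz_admissible M \<Phi> u f)" for \<Phi> u f
    by (rule bdd_belowI[of _ 0]) (auto dest: pos)
  have ne3: "?A3 \<noteq> {}" using ne1 ne2 key by blast
  have mp: "(\<lambda>x. f1 x * f2 x) \<in> borel_measurable M" using mf1 mf2 by measurable
  define L where "L = Inf ?A3"
  define N1 where "N1 = Inf ?A1"
  define N2 where "N2 = Inf ?A2"
  have L0: "L \<ge> 0" unfolding L_def using ne3 by (intro cInf_greatest) (auto dest: pos intro: less_imp_le)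
  have N10: "N1 \<ge> 0" unfolding N1_def using ne1 by (intro cInf_greatest) (auto dest: pos intro: less_imp_le)
  have Lb: "L \<le> 2 * b1 * b2" if "b1 \<in> ?A1" "b2 \<in> ?A2" for b1 b2
    unfolding L_def using key[OF that] bdd by (intro cInf_lower) auto
  have step1: "L \<le> 2 * N1 * b2" if b2: "b2 \<in> ?A2" for b2
  proof -
    have b2p: "b2 > 0" using pos b2 by auto
    have "L / (2 * b2) \<le> N1" unfolding N1_def
    proof (rule cInf_greatest[OF ne1])
      fix b1 assume "b1 \<in> ?A1"
      from Lb[OF this b2] b2p show "L / (2 * b2) \<le> b1" by (simp add: field_simps)
    qed
    thus ?thesis using b2p by (simp add: field_simps)
  qed
  have "L \<le> 2 * N1 * N2"
  proof (cases "N1 = 0")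
    case True
    then show ?thesis using step1 ne2 by fastforce
  next
    case False
    hence N1p: "N1 > 0" using N10 by auto
    have "L / (2 * N1) \<le> N2" unfolding N2_def
    proof (rule cInf_greatest[OF ne2])
      fix b2 assume "b2 \<in> ?A2"
      from step1[OF this] N1p show "L / (2 * N1) \<le> b2" by (simp add: field_simps)
    qed
    thus ?thesis using N1p by (simp add: field_simps)
  qed
  thus ?thesis using mp ne3 unfolding wOrlicz_space_def wOrlicz_norm_def L_def N1_def N2_def by auto
qed

end
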